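(* Let $\min(p,q)\ge 2$ and let $M_0, M_1, M_2$ be three Minkowski patches of $\widetilde{\mathrm{Ein}}^{p,q}$ with $M_1 \neq \iota(M_2)$, such that for a stereographic projection $s : M_0\to\mathbb{R}^{p,q}$, both $s(M_0\cap M_1)$ and $s(M_0\cap M_2)$ are of the form $H_{w,\alpha}$ with $w\in\mathcal{C}\setminus\{0\}$, $\alpha\in\mathbb{R}$. If $M_0 \cap M_1$ and $M_0 \cap M_2$ are disjoint, then $\iota(M_0) \subset M_1 \cup M_2$.
   Context: $\widetilde{\mathrm{Ein}}^{p,q}\cong\mathbb{S}^p\times\mathbb{S}^q$ is the set of isotropic vectors of Euclidean norm 1 in $\mathbb{R}^{p+1,q+1}$, double covering $\mathrm{Ein}^{p,q}$ (isotropic lines) via $\pi_{\mathbf{X}}$; $\iota$ is the product of antipodal maps. Minkowski patches of $\widetilde{\mathrm{Ein}}^{p,q}$ are the connected components of $\pi_{\mathbf{X}}^{-1}(\{[u]:B(v,u)\neq0\})$, $v$ isotropic. A stereographic projection is a conformal diffeomorphism from a Minkowski patch onto $\mathbb{R}^{p,q}$. On $\mathbb{R}^{p,q}$ ($n=p+q$): $b(v,w) = -v_1w_1 - \cdots - v_pw_p + v_{p+1}w_{p+1} + \cdots + v_nw_n$, $\mathcal{C}=\{v:b(v,v)=0\}$, and $H_{w,\alpha}=\{v: b(w,v)>\alpha\}$. *)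

theory Defs
  imports "HOL-Analysis.Analysis"
begin

text \<open>Pseudo-Euclidean form on real^'n whose negative-signature coordinates are
  the index set N (so p = card N, q = CARD('n) - card N).\<close>
definition pform :: "'n::finite set \<Rightarrow> real^'n \<Rightarrow> real^'n \<Rightarrow> real" where
  "pform N v w = (\<Sum>i\<in>UNIV. (if i \<in> N then -1 else 1) * (v$i * w$i))"

definition light_cone :: "'n::finite set \<Rightarrow> (real^'n) set" where
  "light_cone N = {v. pform N v v = 0}"

definition Hset :: "'n::finite set \<Rightarrow> real^'n \<Rightarrow> real \<Rightarrow> (real^'n) set" where
  "Hset N w \<alpha> = {v. pform N w v > \<alpha>}"

text \<open>Double cover of the Einstein universe: isotropic vectors of Euclidean norm 1.\<close>
definition Ein_tilde :: "'m::finite set \<Rightarrow> (real^'m) set" where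
  "Ein_tilde N' = {u. pform N' u u = 0 \<and> norm u = 1}"

definition iota :: "real^'m \<Rightarrow> real^'m" where
  "iota u = - u"

definition minkowski_patch :: "'m::finite set \<Rightarrow> (real^'m) set \<Rightarrow> bool" where
  "minkowski_patch N' M \<longleftrightarrow>
     (\<exists>v. v \<noteq> 0 \<and> pform N' v v = 0 \<and>
        (\<exists>x \<in> {u \<in> Ein_tilde N'. pform N' v u \<noteq> 0}.
            M = connected_component_set {u \<in> Ein_tilde N'. pform N' v u \<noteq> 0} x))"

primrec Ck_on :: "nat \<Rightarrow> ('a::real_normed_vector \<Rightarrow> 'b::real_normed_vector) \<Rightarrow> 'a set \<Rightarrow> bool" where
  "Ck_on 0 f S = continuous_on S f"
| "Ck_on (Suc k) f S =
     (\<exists>f'. (\<forall>x\<in>S. (f has_derivative f' x) (at x)) \<and> (\<forall>h. Ck_on k (\<lambda>x. f' x h) S))"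

definition smooth_on :: "('a::real_normed_vector \<Rightarrow> 'b::real_normed_vector) \<Rightarrow> 'a set \<Rightarrow> bool" where
  "smooth_on f S \<longleftrightarrow> (\<forall>k. Ck_on k f S)"

text \<open>Stereographic projection: a conformal diffeomorphism s from a Minkowski patch M of
  Ein_tilde (in R^{p+1,q+1}, negative coordinates N') onto R^{p,q} (negative coordinates N).
  Expressed via the inverse parametrisation inv_into M s : R^{p,q} \<rightarrow> M \<subseteq> R^{p+q+2},
  which is smooth and whose differential pulls back B to a positive multiple of b.\<close>
definition stereographic_projection ::
  "'m::finite set \<Rightarrow> 'n::finite set \<Rightarrow> (real^'m) set \<Rightarrow> (real^'m \<Rightarrow> real^'n) \<Rightarrow> bool" where
  "stereographic_projection N' N M s \<longleftrightarrow>
     minkowski_patch N' M \<and> bij_betw s M UNIV \<and> continuous_on M s \<and>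
     smooth_on (inv_into M s) UNIV \<and>
     (\<forall>y. \<exists>c>0. \<exists>\<phi>'. (inv_into M s has_derivative \<phi>') (at y) \<and>
          (\<forall>h k. pform N' (\<phi>' h) (\<phi>' k) = c * pform N h k))"

end

theory Submission
  imports Defs
begin


definition J :: "'n::finite set \<Rightarrow> real^'n \<Rightarrow> real^'n" where
  "J N v = (\<chi> i. (if i \<in> N then -1 else 1) * v$i)"

lemma pform_J: "pform N v w = inner (J N v) w"
  unfolding pform_def J_def inner_vec_def by (simp add: mult.assoc)

lemma J_J[simp]: "J N (J N v) = v"
  unfolding J_def by (simp add: vec_eq_iff)

lemma J_add[simp]: "J N (a + b) = J N a + J N b" and J_scale[simp]: "J N (c *\<^sub>R a) = c *\<^sub>R J N a"
  and J_minus[simp]: "J N (- a) = - J N a" and J_diff[simp]: "J N (a - b) = J N a - J N b"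
  and J_zero[simp]: "J N 0 = 0"
  unfolding J_def by (auto simp: vec_eq_iff algebra_simps)

lemma inner_JJ: "inner (J N v) (J N w) = inner v w"
  unfolding J_def inner_vec_def by (auto intro!: sum.cong)

lemma pform_sym: "pform N v w = pform N w v"
  unfolding pform_def by (simp add: mult.commute)

lemma pform_add_left[simp]: "pform N (a + b) w = pform N a w + pform N b w"
  and pform_add_right[simp]: "pform N w (a + b) = pform N w a + pform N w b"
  and pform_scale_left[simp]: "pform N (c *\<^sub>R a) w = c * pform N a w"
  and pform_scale_right[simp]: "pform N w (c *\<^sub>R a) = c * pform N w a"
  and pform_minus_left[simp]: "pform N (- a) w = - pform N a w"
  and pform_minus_right[simp]: "pform N w (- a) = - pform N w a"
  and pform_diff_left[simp]: "pform N (a - b) w = pform N a w - pform N b w"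
  and pform_diff_right[simp]: "pform N w (a - b) = pform N w a - pform N w b"
  and pform_zero_left[simp]: "pform N 0 w = 0"
  and pform_zero_right[simp]: "pform N w 0 = 0"
  by (simp_all add: pform_J inner_add_left inner_add_right inner_diff_left inner_diff_right)

lemma pform_Jself: "pform N v (J N v) = (norm v)^2"
  by (simp add: pform_J inner_JJ power2_norm_eq_inner)

lemma continuous_pform[continuous_intros]:
  "continuous_on S f \<Longrightarrow> continuous_on S (\<lambda>x. pform N a (f x))"
  unfolding pform_J by (intro continuous_intros)



lemma kl:
  fixes a b :: "real^'m::finite"
  assumes "3 \<le> card I"
  shows "\<exists>h. h \<noteq> 0 \<and> pform N a h = 0 \<and> pform N b h = 0 \<and> (\<forall>l. l \<notin> I \<longrightarrow> h$l = 0)"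
proof -
  obtain T where "T \<subseteq> I" "card T = 3" using ex_card[OF assms] by blast
  then obtain i j k where T: "T = {i,j,k}" "i \<noteq> j" "j \<noteq> k" "i \<noteq> k" by (auto simp: card_3_iff)
  define \<alpha> :: "real^3" where "\<alpha> = vector [(J N a)$i, (J N a)$j, (J N a)$k]"
  define \<beta> :: "real^3" where "\<beta> = vector [(J N b)$i, (J N b)$j, (J N b)$k]"
  have "dim {\<alpha>, \<beta>} \<le> card {\<alpha>, \<beta>}"
    by (rule dim_le_card) (auto intro: span_base)
  also have "\<dots> \<le> 2" by (simp add: card_insert_if)
  finally have "dim {\<alpha>,\<beta>} < DIM(real^3)" by simp
  then obtain x where x: "x \<noteq> 0" "\<And>y. y \<in> span {\<alpha>,\<beta>} \<Longrightarrow> orthogonal x y"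
    using orthogonal_to_subspace_exists by blast
  have xa: "inner x \<alpha> = 0" and xb: "inner x \<beta> = 0"
    using x(2)[of \<alpha>] x(2)[of \<beta>] by (auto simp: orthogonal_def span_base)
  define h where "h = x$1 *\<^sub>R axis i 1 + x$2 *\<^sub>R axis j 1 + x$3 *\<^sub>R axis k (1::real)"
  have hi: "h$i = x$1" "h$j = x$2" "h$k = x$3" using T unfolding h_def by (auto simp: axis_def)
  have hl: "\<forall>l. l \<notin> I \<longrightarrow> h$l = 0" using T \<open>T \<subseteq> I\<close> unfolding h_def by (auto simp: axis_def)
  have ev: "inner (J N c) h = inner x (vector [(J N c)$i, (J N c)$j, (J N c)$k])" for c
  proof -
    have "inner (J N c) h = x$1 * (J N c)$i + x$2 * (J N c)$j + x$3 * (J N c)$k"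
      unfolding h_def by (simp add: inner_add_right inner_axis algebra_simps)
    also have "\<dots> = inner x (vector [(J N c)$i, (J N c)$j, (J N c)$k])"
      by (simp add: inner_vec_def sum_3)
    finally show ?thesis .
  qed
  have "h \<noteq> 0"
  proof
    assume "h = 0"
    then have "x$1 = 0" "x$2 = 0" "x$3 = 0" using hi by auto
    then have "x = 0" by (simp add: vec_eq_iff forall_3)
    with x show False by simp
  qed
  moreover have "pform N a h = 0"
    using xa ev[of a] unfolding pform_J \<alpha>_def by simp
  moreover have "pform N b h = 0"
    using xb ev[of b] unfolding pform_J \<beta>_def by simp
  ultimately show ?thesis using hl by blast
qed

lemma pform_supp_neg:
  assumes "I \<subseteq> N" "\<forall>l. l \<notin> I \<longrightarrow> h$l = 0"
  shows "pform N h h = - (norm h)\<^sup>2"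
  unfolding pform_def power2_norm_eq_inner inner_vec_def
  using assms by (auto simp: sum_negf[symmetric] intro!: sum.cong) blast

lemma pform_supp_pos:
  assumes "I \<inter> N = {}" "\<forall>l. l \<notin> I \<longrightarrow> h$l = 0"
  shows "pform N h h = (norm h)\<^sup>2"
  unfolding pform_def power2_norm_eq_inner inner_vec_def
  using assms by (auto intro!: sum.cong) blast



lemma kl_sign:
  fixes a b :: "real^'m::finite"
  assumes "3 \<le> card N" "3 \<le> card (UNIV - N)" "\<sigma> \<noteq> (0::real)"
  shows "\<exists>h. pform N a h = 0 \<and> pform N b h = 0 \<and> \<sigma> * pform N h h > 0"
proof (cases "\<sigma> > 0")
  case True
  obtain h where h: "h \<noteq> 0" "pform N a h = 0" "pform N b h = 0" "\<forall>l. l \<notin> UNIV - N \<longrightarrow> h$l = 0"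
    using kl[OF assms(2)] by blast
  have "pform N h h = (norm h)\<^sup>2" by (rule pform_supp_pos[of "UNIV - N"]) (use h in auto)
  with h True show ?thesis by auto
next
  case False
  with assms have s: "\<sigma> < 0" by auto
  obtain h where h: "h \<noteq> 0" "pform N a h = 0" "pform N b h = 0" "\<forall>l. l \<notin> N \<longrightarrow> h$l = 0"
    using kl[OF assms(1)] by blast
  have "pform N h h = - (norm h)\<^sup>2" by (rule pform_supp_neg[of N]) (use h in auto)
  moreover have "- (norm h)\<^sup>2 < 0" using h by simp
  ultimately have "\<sigma> * pform N h h > 0" using s by (simp only:) (rule mult_neg_neg)
  with h show ?thesis by blast
qed

definition cond :: "real \<Rightarrow> real \<Rightarrow> real \<Rightarrow> real \<Rightarrow> bool" where
  "cond \<beta> L A Q \<longleftrightarrow> \<beta> > 0 \<or> L > 0 \<or> (L = 0 \<and> A * Q < 0)"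

lemma germ1:
  assumes "\<beta> \<ge> 0" "cond \<beta> L A Q"
  shows "\<exists>\<delta>>0. \<forall>t. 0 < t \<and> t < \<delta> \<longrightarrow> \<beta> + t * L - A * (t\<^sup>2 * Q) > 0"
proof -
  consider "\<beta> > 0" | "\<beta> = 0" "L > 0" | "\<beta> = 0" "L = 0" "A * Q < 0" using assms unfolding cond_def by linarith
  then show ?thesis
  proof cases
    case 1
    define \<delta> where "\<delta> = min 1 (\<beta> / (\<bar>L\<bar> + \<bar>A*Q\<bar> + 1))"
    have "\<delta> > 0" using 1 unfolding \<delta>_def by auto
    moreover have "\<beta> + t * L - A * (t\<^sup>2 * Q) > 0" if "0 < t" "t < \<delta>" for t
    proof -
      have t1: "t < 1" and t2: "t * (\<bar>L\<bar> + \<bar>A*Q\<bar> + 1) < \<beta>"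
        using that unfolding \<delta>_def by (auto simp: field_simps)
      have "t * (- \<bar>L\<bar>) \<le> t * L" by (rule mult_left_mono) (use that in auto)
      then have "t * L \<ge> - (t * \<bar>L\<bar>)" by simp
      moreover have "A * (t\<^sup>2 * Q) \<le> t * \<bar>A*Q\<bar>"
      proof -
        have e: "A * (t\<^sup>2 * Q) = t\<^sup>2 * (A * Q)" by (simp only: mult_ac)
        have "t\<^sup>2 * (A * Q) \<le> t\<^sup>2 * \<bar>A*Q\<bar>" by (rule mult_left_mono) auto
        then have "A * (t\<^sup>2 * Q) \<le> t\<^sup>2 * \<bar>A*Q\<bar>" by (simp only: e)
        also have "\<dots> \<le> t * \<bar>A*Q\<bar>" using that t1 by (simp add: power2_eq_square mult_right_mono)
        finally show ?thesis .
      qed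
      moreover have "t * (\<bar>L\<bar> + \<bar>A*Q\<bar> + 1) = t * \<bar>L\<bar> + t * \<bar>A*Q\<bar> + t" by (simp add: algebra_simps)
      ultimately show ?thesis using t2 that(1) by linarith
    qed
    ultimately show ?thesis by blast
  next
    case 2
    define \<delta> where "\<delta> = L / (\<bar>A*Q\<bar> + 1)"
    have "\<delta> > 0" using 2 unfolding \<delta>_def by auto
    moreover have "\<beta> + t * L - A * (t\<^sup>2 * Q) > 0" if "0 < t" "t < \<delta>" for t
    proof -
      have "t * (\<bar>A*Q\<bar> + 1) < L" using that unfolding \<delta>_def by (auto simp: field_simps)
      then have "t * (A * Q) < L" by (smt (verit) abs_ge_self mult_left_mono that(1))
      then have "t * (t * (A*Q)) < t * L" using that by simp
      then show ?thesis using 2 by (simp add: power2_eq_square algebra_simps)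
    qed
    ultimately show ?thesis by blast
  next
    case 3
    have "\<beta> + t * L - A * (t\<^sup>2 * Q) > 0" if "0 < t" for t
    proof -
      have e: "\<beta> + t * L - A * (t\<^sup>2 * Q) = - (t\<^sup>2 * (A * Q))" using 3 by (simp add: mult_ac)
      have "t\<^sup>2 * (A * Q) < 0" by (rule mult_pos_neg) (use 3 that in auto)
      then show ?thesis unfolding e by linarith
    qed
    then show ?thesis by (intro exI[of _ 1]) auto
  qed
qed

lemma germ2:
  assumes "\<beta>1 \<ge> 0" "cond \<beta>1 L1 A1 Q" "\<beta>2 \<ge> 0" "cond \<beta>2 L2 A2 Q"
  shows "\<exists>t>0. \<beta>1 + t * L1 - A1 * (t\<^sup>2 * Q) > 0 \<and> \<beta>2 + t * L2 - A2 * (t\<^sup>2 * Q) > 0"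
proof -
  obtain d1 where d1: "d1 > 0" "\<forall>t. 0 < t \<and> t < d1 \<longrightarrow> \<beta>1 + t * L1 - A1 * (t\<^sup>2 * Q) > 0"
    using germ1[OF assms(1,2)] by blast
  obtain d2 where d2: "d2 > 0" "\<forall>t. 0 < t \<and> t < d2 \<longrightarrow> \<beta>2 + t * L2 - A2 * (t\<^sup>2 * Q) > 0"
    using germ1[OF assms(3,4)] by blast
  define t where "t = min d1 d2 / 2"
  have "0 < t" "t < d1" "t < d2" using d1 d2 unfolding t_def by auto
  then show ?thesis using d1(2)[rule_format, of t] d2(2)[rule_format, of t] by blast
qed

lemma small_quad:
  assumes "(a::real) > 0"
  shows "\<exists>\<delta>>0. a + \<delta> * b + \<delta>\<^sup>2 * c > 0"
proof -
  obtain d where d: "d > 0" "\<forall>t. 0 < t \<and> t < d \<longrightarrow> a + t * b - (-c) * (t\<^sup>2 * 1) > 0"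
    using germ1[of a b "-c" 1] assms by (auto simp: cond_def)
  then have "a + (d/2) * b - (-c) * ((d/2)\<^sup>2 * 1) > 0" by (intro d(2)[rule_format]) auto
  then show ?thesis using d(1) by (intro exI[of _ "d/2"]) (auto simp: mult.commute)
qed



lemma J_linear: "linear (J N)" by (rule linearI) simp_all

lemma continuous_J[continuous_intros]: "continuous_on S f \<Longrightarrow> continuous_on S (\<lambda>x. J N (f x))"
  by (rule bounded_linear.continuous_on[OF J_linear[unfolded linear_conv_bounded_linear]])

definition Pset :: "'m::finite set \<Rightarrow> real^'m \<Rightarrow> (real^'m) set" where
  "Pset N v = {u \<in> Ein_tilde N. pform N v u > 0}"

lemma pform_sub_sq:
  assumes "pform N s v = c" "pform N v s = c" "pform N v v = 0"
  shows "pform N (s - k *\<^sub>R v) (s - k *\<^sub>R v) = pform N s s - 2 * k * c"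
  using assms by (simp add: algebra_simps)

lemma chart_null:
  assumes "pform N v v = 0" "pform N v w = c" "c \<noteq> 0" "pform N v x = 0"
  defines "y \<equiv> w + x - (pform N (w + x) (w + x) / (2*c)) *\<^sub>R v"
  shows "pform N y y = 0" "pform N v y = c"
proof -
  have vx: "pform N x v = 0" "pform N w v = c" using assms pform_sym by metis+
  define q where "q = pform N (w + x) (w + x)"
  have sv: "pform N (w + x) v = c" "pform N v (w + x) = c" using vx assms by simp_all
  have "pform N y y = q - 2 * (q / (2*c)) * c"
    unfolding y_def q_def by (rule pform_sub_sq[OF sv assms(1)])
  also have "\<dots> = 0" using assms(3) by simp
  finally show "pform N y y = 0" .
  show "pform N v y = c" unfolding y_def using assms by simp
qed

lemma Pset_connected:
  assumes "v \<noteq> 0" "pform N v v = 0"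
  shows "connected (Pset N v)"
proof -
  define w where "w = (1 / (norm v)\<^sup>2) *\<^sub>R J N v"
  have vw: "pform N v w = 1" using assms unfolding w_def by (simp add: pform_Jself)
  define V where "V = {x. pform N v x = 0}"
  define \<psi> where "\<psi> x = w + x - (pform N (w + x) (w + x) / (2*1)) *\<^sub>R v" for x
  define f where "f x = (1 / norm (\<psi> x)) *\<^sub>R \<psi> x" for x
  have psi: "pform N (\<psi> x) (\<psi> x) = 0" "pform N v (\<psi> x) = 1" if "x \<in> V" for x
    using chart_null[OF assms(2) vw, of x] that unfolding V_def \<psi>_def by auto
  have psinz: "\<psi> x \<noteq> 0" if "x \<in> V" for x using psi(2)[OF that] by auto
  have "convex V" unfolding V_def pform_J by (rule convex_hyperplane)
  then have cV: "connected V" by (rule convex_connected)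
  have cpsi: "continuous_on V \<psi>" unfolding \<psi>_def pform_J by (intro continuous_intros) auto
  have c1: "continuous_on V (\<lambda>x. 1 / norm (\<psi> x))"
    by (intro continuous_intros cpsi) (use psinz in auto)
  have "continuous_on V f" unfolding f_def by (rule continuous_on_scaleR[OF c1 cpsi])
  with cV have "connected (f ` V)" using connected_continuous_image by blast
  moreover have "f ` V = Pset N v"
  proof
    show "f ` V \<subseteq> Pset N v"
    proof
      fix u assume "u \<in> f ` V"
      then obtain x where x: "x \<in> V" "u = f x" by auto
      have n: "norm (\<psi> x) > 0" using psinz[OF x(1)] by auto
      have "pform N u u = 0" unfolding x(2) f_def
        by (simp only: pform_scale_left pform_scale_right psi[OF x(1)] mult_zero_right)
      moreover have "norm u = 1" unfolding x(2) f_def using n by simp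
      moreover have "pform N v u > 0" unfolding x(2) f_def
        by (simp only: pform_scale_right psi[OF x(1)]) (use n in simp)
      ultimately show "u \<in> Pset N v" unfolding Pset_def Ein_tilde_def by simp
    qed
  next
    show "Pset N v \<subseteq> f ` V"
    proof
      fix u assume u: "u \<in> Pset N v"
      define a where "a = pform N v u"
      have a: "a > 0" "pform N u u = 0" "norm u = 1" using u unfolding Pset_def Ein_tilde_def a_def by auto
      define x where "x = (1/a) *\<^sub>R u - w"
      have xV: "x \<in> V" unfolding V_def x_def using a vw by (simp add: a_def)
      have "\<psi> x = (1/a) *\<^sub>R u" unfolding \<psi>_def x_def using a by simp
      then have "f x = u" unfolding f_def using a by simp
      with xV show "u \<in> f ` V" by blast
    qed
  qed
  ultimately show ?thesis by simp
qed

lemma patch_Pset: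
  assumes "minkowski_patch N M"
  shows "\<exists>v. v \<noteq> 0 \<and> pform N v v = 0 \<and> M = Pset N v"
proof -
  obtain v x where v: "v \<noteq> 0" "pform N v v = 0" and x: "x \<in> {u \<in> Ein_tilde N. pform N v u \<noteq> 0}"
    and M: "M = connected_component_set {u \<in> Ein_tilde N. pform N v u \<noteq> 0} x"
    using assms unfolding minkowski_patch_def by blast
  define v' where "v' = (if pform N v x > 0 then v else - v)"
  have v'1: "v' \<noteq> 0" using v(1) unfolding v'_def by simp
  have v'2: "pform N v' v' = 0" using v(2) unfolding v'_def by simp
  have v'3: "pform N v' x > 0" using x unfolding v'_def by auto
  have v'4: "pform N v' u \<noteq> 0 \<longleftrightarrow> pform N v u \<noteq> 0" for u unfolding v'_def by simp
  define U where "U = {u \<in> Ein_tilde N. pform N v' u \<noteq> 0}"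
  have U: "{u \<in> Ein_tilde N. pform N v u \<noteq> 0} = U" unfolding U_def using v'4 by blast
  have xE: "x \<in> Ein_tilde N" using x by blast
  have xP: "x \<in> Pset N v'" using xE v'3 unfolding Pset_def by blast
  have PU: "Pset N v' \<subseteq> U" unfolding U_def Pset_def by force
  have sub: "connected_component_set U x \<subseteq> U" by (rule connected_component_subset)
  have xin: "x \<in> connected_component_set U x" using xP PU by (simp add: subsetD)
  have "connected_component_set U x = Pset N v'"
  proof
    show "Pset N v' \<subseteq> connected_component_set U x"
      by (rule connected_component_maximal[OF xP Pset_connected[OF v'1 v'2] PU])
  next
    show "connected_component_set U x \<subseteq> Pset N v'"
    proof
      fix y assume y: "y \<in> connected_component_set U x"
      have yU: "y \<in> U" using y sub by blast
      show "y \<in> Pset N v'"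
      proof (rule ccontr)
        assume "y \<notin> Pset N v'"
        then have "pform N v' y \<le> 0" using yU unfolding U_def Pset_def by auto
        then have "inner (J N v') y \<le> 0" "0 \<le> inner (J N v') x" using v'3 by (simp_all add: pform_J)
        then obtain z where z: "z \<in> connected_component_set U x" "inner (J N v') z = 0"
          using connected_ivt_hyperplane[OF connected_connected_component y xin, of "J N v'" 0] by blast
        then have "z \<in> U" using sub by blast
        then show False using z(2) unfolding U_def pform_J by simp
      qed
    qed
  qed
  then have "M = Pset N v'" using M U by simp
  with v'1 v'2 show ?thesis by blast
qed

lemma iota_Pset: "iota ` Pset N v = Pset N (- v)"
proof -
  have "iota ` Pset N v \<subseteq> Pset N (- v)"
    unfolding iota_def Pset_def Ein_tilde_def by auto
  moreover have "Pset N (- v) \<subseteq> iota ` Pset N v"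
  proof
    fix u assume "u \<in> Pset N (- v)"
    then have "- u \<in> Pset N v" "u = iota (- u)" unfolding iota_def Pset_def Ein_tilde_def by auto
    then show "u \<in> iota ` Pset N v" by blast
  qed
  ultimately show ?thesis by blast
qed



locale core =
  fixes N :: "'m::finite set" and v0 v1 v2 z :: "real^'m"
  assumes cN: "3 \<le> card N" and cP: "3 \<le> card (UNIV - N)"
    and n0: "pform N v0 v0 = 0" and n1: "pform N v1 v1 = 0" and n2: "pform N v2 v2 = 0"
    and nz1: "v1 \<noteq> 0" and nz2: "v2 \<noteq> 0"
    and zn: "pform N z z = 0" and zp: "pform N v0 z > 0"
    and b1: "pform N v1 z \<ge> 0" and b2: "pform N v2 z \<ge> 0"
    and ne1: "\<exists>y. pform N y y = 0 \<and> pform N v0 y > 0 \<and> pform N v1 y > 0"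
    and ne2: "\<exists>y. pform N y y = 0 \<and> pform N v0 y > 0 \<and> pform N v2 y > 0"
    and np: "\<not> (\<exists>\<rho>>0. v2 = - \<rho> *\<^sub>R v1)"
begin

definition G where "G \<longleftrightarrow> (\<exists>y. pform N y y = 0 \<and> pform N v0 y > 0 \<and> pform N v1 y > 0 \<and> pform N v2 y > 0)"
definition c0 where "c0 = pform N v0 z"
definition r1 where "r1 = v1 - (pform N v1 v0 / c0) *\<^sub>R z"
definition r2 where "r2 = v2 - (pform N v2 v0 / c0) *\<^sub>R z"
definition A1 where "A1 = pform N v1 v0 / (2 * c0)"
definition A2 where "A2 = pform N v2 v0 / (2 * c0)"
definition prj where "prj x = x - (inner (J N v0) x / (norm v0)\<^sup>2) *\<^sub>R J N v0"
definition s1 where "s1 = prj (J N r1)"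
definition s2 where "s2 = prj (J N r2)"

lemma c0_pos: "c0 > 0" using zp unfolding c0_def by simp
lemma v0nz: "v0 \<noteq> 0" using zp by auto
lemma zv0: "pform N z v0 = c0" unfolding c0_def by (rule pform_sym)

lemma chart_val:
  fixes t :: real and v :: "real^'m"
  assumes e: "pform N v0 e = 0"
  defines "y \<equiv> z + t *\<^sub>R e - (pform N (z + t *\<^sub>R e) (z + t *\<^sub>R e) / (2*c0)) *\<^sub>R v0"
  shows "pform N y y = 0" "pform N v0 y = c0"
    "pform N v y = pform N v z + t * pform N (v - (pform N v v0 / c0) *\<^sub>R z) e
        - (pform N v v0 / (2*c0)) * (t\<^sup>2 * pform N e e)"
proof -
  have c: "c0 \<noteq> 0" using c0_pos by simp
  have e': "pform N v0 (t *\<^sub>R e) = 0" using e by simp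
  show "pform N y y = 0" "pform N v0 y = c0"
    using chart_null[OF n0 c0_def[symmetric] c e'] unfolding y_def by auto
  have Q: "pform N (z + t *\<^sub>R e) (z + t *\<^sub>R e) = 2 * t * pform N z e + t\<^sup>2 * pform N e e"
    using zn pform_sym[of N e z] by (simp add: power2_eq_square algebra_simps)
  have "pform N v y = pform N v z + t * pform N v e
      - (pform N (z + t *\<^sub>R e) (z + t *\<^sub>R e) / (2*c0)) * pform N v v0"
    unfolding y_def by simp
  also have "\<dots> = pform N v z + t * pform N (v - (pform N v v0 / c0) *\<^sub>R z) e
        - (pform N v v0 / (2*c0)) * (t\<^sup>2 * pform N e e)"
    unfolding Q using c by (simp add: field_simps)
  finally show "pform N v y = pform N v z + t * pform N (v - (pform N v v0 / c0) *\<^sub>R z) e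
        - (pform N v v0 / (2*c0)) * (t\<^sup>2 * pform N e e)" .
qed

lemma germ_G:
  assumes e: "pform N v0 e = 0"
    and c1: "cond (pform N v1 z) (pform N r1 e) A1 (pform N e e)"
    and c2: "cond (pform N v2 z) (pform N r2 e) A2 (pform N e e)"
  shows G
proof -
  obtain t where t: "t > 0" "pform N v1 z + t * pform N r1 e - A1 * (t\<^sup>2 * pform N e e) > 0"
    "pform N v2 z + t * pform N r2 e - A2 * (t\<^sup>2 * pform N e e) > 0"
    using germ2[OF b1 c1 b2 c2] by blast
  define y where "y = z + t *\<^sub>R e - (pform N (z + t *\<^sub>R e) (z + t *\<^sub>R e) / (2*c0)) *\<^sub>R v0"
  have "pform N y y = 0" "pform N v0 y = c0" using chart_val[OF e, where t=t] unfolding y_def by auto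
  moreover have "pform N v1 y = pform N v1 z + t * pform N r1 e - A1 * (t\<^sup>2 * pform N e e)"
    unfolding y_def r1_def A1_def by (rule chart_val(3)[OF e])
  moreover have "pform N v2 y = pform N v2 z + t * pform N r2 e - A2 * (t\<^sup>2 * pform N e e)"
    unfolding y_def r2_def A2_def by (rule chart_val(3)[OF e])
  ultimately show G unfolding G_def using c0_pos t by auto
qed

lemma prj_inner: "inner (J N v0) e = 0 \<Longrightarrow> inner (prj x) e = inner x e"
  unfolding prj_def by (simp add: inner_diff_left)

lemma prj_perp: "inner (J N v0) (prj x) = 0"
proof -
  have "inner (J N v0) (J N v0) = (norm v0)\<^sup>2" by (simp add: power2_norm_eq_inner inner_JJ)
  then show ?thesis unfolding prj_def using v0nz by (simp add: inner_diff_right)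
qed

lemma pf_prj: "pform N v0 (prj x) = 0" unfolding pform_J by (rule prj_perp)

lemma pf_r_prj: "pform N v0 e = 0 \<Longrightarrow> pform N r e = inner (prj (J N r)) e"
  unfolding pform_J by (simp add: prj_inner)

lemma prj_zero: assumes "prj (J N r) = 0" shows "\<exists>c. r = c *\<^sub>R v0"
proof -
  define k where "k = inner (J N v0) (J N r) / (norm v0)\<^sup>2"
  have "J N r = k *\<^sub>R J N v0" using assms unfolding prj_def k_def by (simp add: algebra_simps)
  then have "J N (J N r) = J N (k *\<^sub>R J N v0)" by simp
  then show ?thesis by auto
qed

lemma prj_lin: "prj (a *\<^sub>R x + b *\<^sub>R y) = a *\<^sub>R prj x + b *\<^sub>R prj y"
  unfolding prj_def by (simp add: inner_add_right algebra_simps add_divide_distrib scaleR_add_left)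

end



context core begin

lemma Br1z: "pform N r1 z = pform N v1 z" unfolding r1_def using zn by simp
lemma Br2z: "pform N r2 z = pform N v2 z" unfolding r2_def using zn by simp
lemma v1_eq: "v1 = r1 + (pform N v1 v0 / c0) *\<^sub>R z" unfolding r1_def by simp
lemma v2_eq: "v2 = r2 + (pform N v2 v0 / c0) *\<^sub>R z" unfolding r2_def by simp
lemma s1_perp: "pform N v0 s1 = 0" unfolding s1_def by (rule pf_prj)
lemma s2_perp: "pform N v0 s2 = 0" unfolding s2_def by (rule pf_prj)
lemma r1_s: "pform N v0 e = 0 \<Longrightarrow> pform N r1 e = inner s1 e" unfolding s1_def by (rule pf_r_prj)
lemma r2_s: "pform N v0 e = 0 \<Longrightarrow> pform N r2 e = inner s2 e" unfolding s2_def by (rule pf_r_prj)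

lemma G_z: "pform N v1 z > 0 \<Longrightarrow> pform N v2 z > 0 \<Longrightarrow> G"
  unfolding G_def using zn zp by blast

lemma par_zero1:
  assumes "r1 = c *\<^sub>R v0" "pform N v1 z = 0"
  shows "r1 = 0"
proof -
  have "c * c0 = 0" using Br1z assms unfolding c0_def by simp
  then show ?thesis using c0_pos assms(1) by simp
qed

lemma par_zero2:
  assumes "r2 = c *\<^sub>R v0" "pform N v2 z = 0"
  shows "r2 = 0"
proof -
  have "c * c0 = 0" using Br2z assms unfolding c0_def by simp
  then show ?thesis using c0_pos assms(1) by simp
qed

lemma A1_nz: "r1 = 0 \<Longrightarrow> A1 \<noteq> 0"
  using v1_eq nz1 c0_pos unfolding A1_def by auto
lemma A2_nz: "r2 = 0 \<Longrightarrow> A2 \<noteq> 0"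
  using v2_eq nz2 c0_pos unfolding A2_def by auto

lemma half:
  assumes "\<exists>c. r1 = c *\<^sub>R v0"
  shows G
proof -
  obtain c where c: "r1 = c *\<^sub>R v0" using assms by blast
  have Lr1: "pform N r1 e = 0" if "pform N v0 e = 0" for e using c that by simp
  show G
  proof (cases "pform N v1 z > 0")
    case b1p: True
    show G
    proof (cases "pform N v2 z > 0")
      case True then show G using G_z b1p by blast
    next
      case False
      then have b20: "pform N v2 z = 0" using b2 by simp
      show G
      proof (cases "s2 = 0")
        case False
        have "inner s2 s2 > 0" using False by simp
        then show G
          by (intro germ_G[OF s2_perp]) (auto simp: cond_def b1p r2_s[OF s2_perp])
      next
        case True
        then obtain c2 where "r2 = c2 *\<^sub>R v0" using prj_zero unfolding s2_def by blast
        then have r20: "r2 = 0" using par_zero2 b20 by blast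
        obtain h where h: "pform N v0 h = 0" "- A2 * pform N h h > 0"
          using kl_sign[OF cN cP, of "- A2" v0 v0] A2_nz[OF r20] by auto
        show G
          by (intro germ_G[OF h(1)]) (use h r20 b1p in \<open>auto simp: cond_def\<close>)
      qed
    qed
  next
    case False
    then have b10: "pform N v1 z = 0" using b1 by simp
    then have r10: "r1 = 0" using par_zero1 c by blast
    have A1nz: "A1 \<noteq> 0" using A1_nz[OF r10] .
    show G
    proof (cases "s2 = 0")
      case True
      then obtain c2 where c2: "r2 = c2 *\<^sub>R v0" using prj_zero unfolding s2_def by blast
      show G
      proof (cases "pform N v2 z > 0")
        case True
        obtain h where h: "pform N v0 h = 0" "- A1 * pform N h h > 0"
          using kl_sign[OF cN cP, of "- A1" v0 v0] A1nz by auto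
        show G
          by (intro germ_G[OF h(1)]) (use h r10 True in \<open>auto simp: cond_def\<close>)
      next
        case False
        then have b20: "pform N v2 z = 0" using b2 by simp
        then have r20: "r2 = 0" using par_zero2 c2 by blast
        define a1 where "a1 = pform N v1 v0"
        define a2 where "a2 = pform N v2 v0"
        have a1: "a1 \<noteq> 0" using A1nz unfolding A1_def a1_def by simp
        have a2: "a2 \<noteq> 0" using A2_nz[OF r20] unfolding A2_def a2_def by simp
        have v1z: "v1 = (a1 / c0) *\<^sub>R z" using v1_eq r10 unfolding a1_def by simp
        have v2z: "v2 = (a2 / c0) *\<^sub>R z" using v2_eq r20 unfolding a2_def by simp
        have v21: "v2 = (a2 / a1) *\<^sub>R v1" using v1z v2z a1 c0_pos by simp
        show G
        proof (cases "a2 / a1 > 0")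
          case True
          obtain y where y: "pform N y y = 0" "pform N v0 y > 0" "pform N v1 y > 0" using ne1 by blast
          have "pform N v2 y = (a2 / a1) * pform N v1 y" unfolding v21 by simp
          then have "pform N v2 y > 0" using mult_pos_pos[OF True y(3)] by (simp only:)
          then show G unfolding G_def using y by blast
        next
          case False
          moreover have "a2 / a1 \<noteq> 0" using a1 a2 by simp
          ultimately have "- (a2 / a1) > 0" by linarith
          moreover have "v2 = - (- (a2 / a1)) *\<^sub>R v1" using v21 by simp
          ultimately show G using np by blast
        qed
      qed
    next
      case False
      have s2pos: "inner s2 s2 > 0" using False by simp
      obtain h where h: "pform N v0 h = 0" "pform N r2 h = 0" "- A1 * pform N h h > 0"
        using kl_sign[OF cN cP, of "- A1" v0 r2] A1nz by auto
      obtain \<delta> where \<delta>: "\<delta> > 0"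
        "- A1 * pform N h h + \<delta> * (- A1 * (2 * pform N h s2)) + \<delta>\<^sup>2 * (- A1 * pform N s2 s2) > 0"
        using small_quad[OF h(3)] by blast
      define e where "e = h + \<delta> *\<^sub>R s2"
      have e0: "pform N v0 e = 0" unfolding e_def using h(1) s2_perp by simp
      have Qe: "pform N e e = pform N h h + 2 * \<delta> * pform N h s2 + \<delta>\<^sup>2 * pform N s2 s2"
        unfolding e_def using pform_sym[of N s2 h] by (simp add: power2_eq_square algebra_simps)
      have "- A1 * pform N e e > 0" using \<delta>(2) unfolding Qe by (simp add: algebra_simps)
      moreover have "pform N r2 e > 0" unfolding e_def using h(2) r2_s[OF s2_perp] s2pos \<delta>(1) by simp
      ultimately show G
        by (intro germ_G[OF e0]) (use r10 in \<open>auto simp: cond_def\<close>)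
    qed
  qed
qed

end



context core begin

lemma E_pos:
  fixes s1 s2 :: "real^'m"
  defines "E \<equiv> norm s2 *\<^sub>R s1 + norm s1 *\<^sub>R s2"
  assumes "E \<noteq> 0"
  shows "inner s1 E > 0" "inner s2 E > 0"
proof -
  define n1 where "n1 = norm s1"
  define n2 where "n2 = norm s2"
  define p where "p = inner s1 s2"
  have ss1: "inner s1 s1 = n1\<^sup>2" unfolding n1_def by (simp add: power2_norm_eq_inner)
  have ss2: "inner s2 s2 = n2\<^sup>2" unfolding n2_def by (simp add: power2_norm_eq_inner)
  have i1: "inner s1 E = n1 * (n1 * n2 + p)"
    unfolding E_def n1_def[symmetric] n2_def[symmetric] p_def
    by (simp add: inner_add_right ss1 power2_eq_square algebra_simps)
  have i2: "inner s2 E = n2 * (n1 * n2 + p)"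
    unfolding E_def n1_def[symmetric] n2_def[symmetric] p_def
    by (simp add: inner_add_right ss2 power2_eq_square inner_commute algebra_simps)
  have iE: "inner E E = 2 * (n1 * n2) * (n1 * n2 + p)"
    unfolding E_def n1_def[symmetric] n2_def[symmetric] p_def
    by (simp add: inner_add_right inner_add_left ss1 ss2 power2_eq_square inner_commute algebra_simps)
  have "inner E E > 0" using assms(2) by simp
  moreover have "n1 \<ge> 0" "n2 \<ge> 0" unfolding n1_def n2_def by auto
  ultimately have "n1 * n2 > 0" "n1 * n2 + p > 0" unfolding iE
    by (smt (verit, ccfv_threshold) mult_nonneg_nonneg zero_less_mult_iff)+
  then have "n1 > 0" "n2 > 0" using \<open>n1 \<ge> 0\<close> \<open>n2 \<ge> 0\<close> by (auto simp: zero_less_mult_iff)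
  show "inner s1 E > 0" unfolding i1 using \<open>n1 > 0\<close> \<open>n1 * n2 + p > 0\<close> by simp
  show "inner s2 E > 0" unfolding i2 using \<open>n2 > 0\<close> \<open>n1 * n2 + p > 0\<close> by simp
qed

lemma np_sw: "\<not> (\<exists>\<rho>>0. v1 = - \<rho> *\<^sub>R v2)"
proof
  assume "\<exists>\<rho>>0. v1 = - \<rho> *\<^sub>R v2"
  then obtain \<rho> where r: "\<rho> > 0" "v1 = - \<rho> *\<^sub>R v2" by blast
  have a: "\<rho> *\<^sub>R v2 = - v1" using r(2) by (simp only: scaleR_minus_left minus_minus)
  have "v2 = (1/\<rho>) *\<^sub>R (\<rho> *\<^sub>R v2)" using r(1) by (simp only: scaleR_scaleR) simp
  then have "v2 = - (1/\<rho>) *\<^sub>R v1" unfolding a by (simp only: scaleR_minus_right scaleR_minus_left)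
  moreover have "1/\<rho> > 0" using r(1) by simp
  ultimately show False using np by blast
qed

lemma swapped: "core N v0 v2 v1 z"
  by (rule core.intro[OF cN cP n0 n2 n1 nz2 nz1 zn zp b2 b1 ne2 ne1 np_sw])

lemma ratio_case:
  assumes b10: "pform N v1 z = 0" and b20: "pform N v2 z = 0"
    and s1nz: "s1 \<noteq> 0" and s2nz: "s2 \<noteq> 0"
    and E0: "norm s2 *\<^sub>R s1 + norm s1 *\<^sub>R s2 = 0"
  shows G
proof -
  define n1 where "n1 = norm s1"
  define n2 where "n2 = norm s2"
  have n1p: "n1 > 0" and n2p: "n2 > 0" using s1nz s2nz unfolding n1_def n2_def by auto
  have "prj (J N (n2 *\<^sub>R r1 + n1 *\<^sub>R r2)) = n2 *\<^sub>R s1 + n1 *\<^sub>R s2"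
    unfolding s1_def s2_def by (simp add: prj_lin)
  also have "\<dots> = 0" using E0 unfolding n1_def n2_def .
  finally obtain c where c: "n2 *\<^sub>R r1 + n1 *\<^sub>R r2 = c *\<^sub>R v0" using prj_zero by blast
  have "c * c0 = pform N (n2 *\<^sub>R r1 + n1 *\<^sub>R r2) z" unfolding c c0_def by simp
  also have "\<dots> = 0" using Br1z Br2z b10 b20 by simp
  finally have "c = 0" using c0_pos by simp
  with c have rr: "n2 *\<^sub>R r1 + n1 *\<^sub>R r2 = 0" by simp
  define a1 where "a1 = pform N v1 v0"
  define a2 where "a2 = pform N v2 v0"
  define K where "K = (n2 * a1 + n1 * a2) / c0"
  have vv: "n2 *\<^sub>R v1 + n1 *\<^sub>R v2 = K *\<^sub>R z"
  proof -
    have Kz: "K *\<^sub>R z = (n2 * (a1 / c0)) *\<^sub>R z + (n1 * (a2 / c0)) *\<^sub>R z"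
      unfolding K_def by (simp add: add_divide_distrib scaleR_add_left)
    have "n2 *\<^sub>R r1 + n1 *\<^sub>R r2 = (n2 *\<^sub>R v1 + n1 *\<^sub>R v2) - K *\<^sub>R z"
      unfolding Kz r1_def r2_def a1_def[symmetric] a2_def[symmetric]
      by (simp add: scaleR_diff_right)
    then show ?thesis using rr by (simp add: eq_diff_eq)
  qed
  show G
  proof (cases "K = 0")
    case True
    then have "n1 *\<^sub>R v2 = - (n2 *\<^sub>R v1)" using vv by (simp add: eq_neg_iff_add_eq_0 add.commute)
    then have "(1/n1) *\<^sub>R (n1 *\<^sub>R v2) = (1/n1) *\<^sub>R (- (n2 *\<^sub>R v1))" by simp
    then have "v2 = - (n2 / n1) *\<^sub>R v1" using n1p by simp
    moreover have "n2 / n1 > 0" using n1p n2p by simp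
    ultimately show G using np by blast
  next
    case Knz: False
    obtain h where h: "pform N v0 h = 0" "pform N r1 h = 0" "- K * pform N h h > 0"
      using kl_sign[OF cN cP, of "- K" v0 r1] Knz by auto
    obtain \<delta> where \<delta>: "\<delta> > 0"
      "- K * pform N h h + \<delta> * (- K * (2 * pform N h s1)) + \<delta>\<^sup>2 * (- K * pform N s1 s1) > 0"
      using small_quad[OF h(3)] by blast
    define e where "e = h + \<delta> *\<^sub>R s1"
    have e0: "pform N v0 e = 0" unfolding e_def using h(1) s1_perp by simp
    have Qe: "pform N e e = pform N h h + 2 * \<delta> * pform N h s1 + \<delta>\<^sup>2 * pform N s1 s1"
      unfolding e_def using pform_sym[of N s1 h] by (simp add: power2_eq_square algebra_simps)
    define q where "q = pform N e e"
    have Kq: "- K * q > 0" using \<delta>(2) unfolding q_def Qe by (simp add: algebra_simps)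
    define l where "l = pform N r1 e"
    have lp: "l > 0" unfolding l_def e_def using h(2) r1_s[OF s1_perp] s1nz \<delta>(1) by simp
    define D where "D = - K * q / (4 * n2)"
    have Dp: "D > 0" unfolding D_def by (rule divide_pos_pos) (use Kq n2p in auto)
    define \<tau> where "\<tau> = (if A1 * q + D \<noteq> 0 then A1 * q + D else A1 * q + D / 2)"
    have \<tau>nz: "\<tau> \<noteq> 0" unfolding \<tau>_def using Dp by auto
    have \<tau>1: "\<tau> - A1 * q > 0" "\<tau> - A1 * q \<le> D" unfolding \<tau>_def using Dp by auto
    define t where "t = l / \<tau>"
    have tnz: "t \<noteq> 0" unfolding t_def using lp \<tau>nz by simp
    have tl: "t * l = t\<^sup>2 * \<tau>" unfolding t_def using \<tau>nz by (simp add: power2_eq_square)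
    define y where "y = z + t *\<^sub>R e - (pform N (z + t *\<^sub>R e) (z + t *\<^sub>R e) / (2*c0)) *\<^sub>R v0"
    have yy: "pform N y y = 0" "pform N v0 y = c0" using chart_val[OF e0, where t=t] unfolding y_def by auto
    have "pform N v1 y = pform N v1 z + t * pform N r1 e - A1 * (t\<^sup>2 * pform N e e)"
      unfolding y_def r1_def A1_def by (rule chart_val(3)[OF e0])
    then have y1: "pform N v1 y = t\<^sup>2 * (\<tau> - A1 * q)"
      using b10 tl unfolding l_def[symmetric] q_def[symmetric] by (simp add: algebra_simps)
    have t2p: "t\<^sup>2 > 0" using tnz by simp
    have y1p: "pform N v1 y > 0" unfolding y1 using t2p \<tau>1(1) by simp
    have "pform N z y = pform N z z + t * pform N (z - (pform N z v0 / c0) *\<^sub>R z) e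
        - (pform N z v0 / (2*c0)) * (t\<^sup>2 * pform N e e)"
      unfolding y_def by (rule chart_val(3)[OF e0])
    then have yz: "pform N z y = - (t\<^sup>2 * q) / 2"
      using zn zv0 c0_pos unfolding q_def[symmetric] by simp
    have "n1 * pform N v2 y = K * pform N z y - n2 * pform N v1 y"
    proof -
      have "pform N (n2 *\<^sub>R v1 + n1 *\<^sub>R v2) y = pform N (K *\<^sub>R z) y" using vv by simp
      then show ?thesis by (simp add: algebra_simps)
    qed
    also have "\<dots> = t\<^sup>2 * (- K * q / 2 - n2 * (\<tau> - A1 * q))"
      unfolding yz y1 by (simp add: algebra_simps)
    also have "\<dots> > 0"
    proof -
      have "n2 * (\<tau> - A1 * q) \<le> n2 * D" using \<tau>1(2) n2p by simp
      also have "n2 * D = - K * q / 4" unfolding D_def using n2p by simp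
      finally have "- K * q / 2 - n2 * (\<tau> - A1 * q) > 0" using Kq by linarith
      then show ?thesis using t2p by simp
    qed
    finally have "pform N v2 y > 0" using n1p by (simp add: zero_less_mult_iff)
    then show G unfolding G_def using yy y1p c0_pos by auto
  qed
qed

theorem core_G: G
proof (cases "\<exists>c. r1 = c *\<^sub>R v0")
  case True then show G by (rule half)
next
  case F1: False
  show G
  proof (cases "\<exists>c. r2 = c *\<^sub>R v0")
    case True
    interpret sw: core N v0 v2 v1 z by (rule swapped)
    have "sw.G"
      by (rule sw.half) (use True in \<open>simp add: sw.r1_def r2_def sw.c0_def c0_def\<close>)
    then show G unfolding sw.G_def G_def by blast
  next
    case F2: False
    have s1nz: "s1 \<noteq> 0" using F1 prj_zero unfolding s1_def by blast
    have s2nz: "s2 \<noteq> 0" using F2 prj_zero unfolding s2_def by blast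
    define E where "E = norm s2 *\<^sub>R s1 + norm s1 *\<^sub>R s2"
    have E0: "pform N v0 E = 0" unfolding E_def using s1_perp s2_perp by simp
    show G
    proof (cases "E = 0")
      case False
      have "inner s1 E > 0" "inner s2 E > 0" using E_pos[of s2 s1] False unfolding E_def by auto
      then show G by (intro germ_G[OF E0]) (auto simp: cond_def r1_s[OF E0] r2_s[OF E0])
    next
      case True
      have ps1: "inner s1 s1 > 0" "inner s2 s2 > 0" using s1nz s2nz by auto
      show G
      proof (cases "pform N v1 z > 0")
        case True
        then show G by (intro germ_G[OF s2_perp]) (use ps1 in \<open>auto simp: cond_def r2_s[OF s2_perp]\<close>)
      next
        case b1n: False
        show G
        proof (cases "pform N v2 z > 0")
          case True
          then show G by (intro germ_G[OF s1_perp]) (use ps1 in \<open>auto simp: cond_def r1_s[OF s1_perp]\<close>)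
        next
          case False
          then show G using ratio_case[OF _ _ s1nz s2nz] b1 b2 b1n True unfolding E_def by force
        qed
      qed
    qed
  qed
qed

end



lemma Pset_scale: "\<rho> > 0 \<Longrightarrow> Pset N (\<rho> *\<^sub>R v) = Pset N v"
  unfolding Pset_def by (auto simp: zero_less_mult_iff)

lemma Hset_nonempty:
  assumes "w \<noteq> 0" shows "Hset N w \<alpha> \<noteq> {}"
proof -
  define x where "x = ((\<bar>\<alpha>\<bar> + 1) / (norm w)\<^sup>2) *\<^sub>R J N w"
  have "pform N w x = \<bar>\<alpha>\<bar> + 1" unfolding x_def using assms by (simp add: pform_Jself)
  then have "x \<in> Hset N w \<alpha>" unfolding Hset_def by simp
  then show ?thesis by blast
qed

lemma normalize_null:
  assumes "pform N y y = 0" "y \<noteq> 0"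
  shows "(1 / norm y) *\<^sub>R y \<in> Ein_tilde N"
  using assms unfolding Ein_tilde_def by simp

theorem fact5p4:
  fixes N :: "'n::finite set" and N' :: "'m::finite set"
    and M0 M1 M2 :: "(real^'m) set" and s :: "real^'m \<Rightarrow> real^'n"
  assumes "CARD('m) = CARD('n) + 2" and "card N' = card N + 1"
    and "card N \<ge> 2" and "CARD('n) - card N \<ge> 2"
    and "minkowski_patch N' M0" and "minkowski_patch N' M1" and "minkowski_patch N' M2"
    and "M1 \<noteq> iota ` M2"
    and "stereographic_projection N' N M0 s"
    and "\<exists>w \<alpha>. w \<in> light_cone N - {0} \<and> s ` (M0 \<inter> M1) = Hset N w \<alpha>"
    and "\<exists>w \<alpha>. w \<in> light_cone N - {0} \<and> s ` (M0 \<inter> M2) = Hset N w \<alpha>"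
    and "(M0 \<inter> M1) \<inter> (M0 \<inter> M2) = {}"
  shows "iota ` M0 \<subseteq> M1 \<union> M2"
proof -
  obtain v0 where v0: "v0 \<noteq> 0" "pform N' v0 v0 = 0" "M0 = Pset N' v0" using patch_Pset[OF assms(5)] by blast
  obtain v1 where v1: "v1 \<noteq> 0" "pform N' v1 v1 = 0" "M1 = Pset N' v1" using patch_Pset[OF assms(6)] by blast
  obtain v2 where v2: "v2 \<noteq> 0" "pform N' v2 v2 = 0" "M2 = Pset N' v2" using patch_Pset[OF assms(7)] by blast
  have cN: "3 \<le> card N'" using assms(2,3) by simp
  have "card N \<le> CARD('n)" by (rule card_mono) auto
  have "card (UNIV - N') = CARD('m) - card N'" by (rule card_Diff_subset) auto
  then have cP: "3 \<le> card (UNIV - N')" using assms(1,2,4) \<open>card N \<le> CARD('n)\<close> by simp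
  have ne: "M0 \<inter> M1 \<noteq> {}" "M0 \<inter> M2 \<noteq> {}"
    using assms(10,11) Hset_nonempty by (metis DiffD2 image_empty insertI1)+
  have ne1: "\<exists>y. pform N' y y = 0 \<and> pform N' v0 y > 0 \<and> pform N' v1 y > 0"
    using ne(1) unfolding v0(3) v1(3) Pset_def Ein_tilde_def by blast
  have ne2: "\<exists>y. pform N' y y = 0 \<and> pform N' v0 y > 0 \<and> pform N' v2 y > 0"
    using ne(2) unfolding v0(3) v2(3) Pset_def Ein_tilde_def by blast
  have np: "\<not> (\<exists>\<rho>>0. v2 = - \<rho> *\<^sub>R v1)"
  proof
    assume "\<exists>\<rho>>0. v2 = - \<rho> *\<^sub>R v1"
    then obtain \<rho> where r: "\<rho> > 0" "v2 = - \<rho> *\<^sub>R v1" by blast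
    have "iota ` M2 = Pset N' (- v2)" unfolding v2(3) by (rule iota_Pset)
    also have "- v2 = \<rho> *\<^sub>R v1" using r(2) by simp
    also have "Pset N' (\<rho> *\<^sub>R v1) = M1" using Pset_scale[OF r(1)] v1(3) by simp
    finally show False using assms(8) by simp
  qed
  show ?thesis
  proof
    fix x assume "x \<in> iota ` M0"
    then obtain u where u: "u \<in> M0" "x = - u" unfolding iota_def by auto
    have uE: "pform N' u u = 0" "norm u = 1" "pform N' v0 u > 0"
      using u(1) unfolding v0(3) Pset_def Ein_tilde_def by auto
    show "x \<in> M1 \<union> M2"
    proof (rule ccontr)
      assume "x \<notin> M1 \<union> M2"
      moreover have "x \<in> Ein_tilde N'" using uE unfolding u(2) Ein_tilde_def by simp
      ultimately have "pform N' v1 x \<le> 0" "pform N' v2 x \<le> 0"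
        unfolding v1(3) v2(3) Pset_def by auto
      then have b: "pform N' v1 u \<ge> 0" "pform N' v2 u \<ge> 0" unfolding u(2) by auto
      interpret c: core N' v0 v1 v2 u
        by (rule core.intro[OF cN cP v0(2) v1(2) v2(2) v1(1) v2(1) uE(1) uE(3) b ne1 ne2 np])
      obtain y where y: "pform N' y y = 0" "pform N' v0 y > 0" "pform N' v1 y > 0" "pform N' v2 y > 0"
        using c.core_G unfolding c.G_def by blast
      have ynz: "y \<noteq> 0" using y(2) by auto
      define y' where "y' = (1 / norm y) *\<^sub>R y"
      have y'E: "y' \<in> Ein_tilde N'" unfolding y'_def by (rule normalize_null[OF y(1) ynz])
      have n: "1 / norm y > 0" using ynz by simp
      have "pform N' v0 y' > 0" "pform N' v1 y' > 0" "pform N' v2 y' > 0"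
        unfolding y'_def using n y by simp_all
      then have "y' \<in> (M0 \<inter> M1) \<inter> (M0 \<inter> M2)" using y'E unfolding v0(3) v1(3) v2(3) Pset_def by auto
      then show False using assms(12) by blast
    qed
  qed
qed


end
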